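(* For every nonnegative integer $n$, $$\sum_{k=0}^{\infty}(-1)^k(4k+1)\,\frac{(-n)_k\,(-4n-\tfrac32)_k\,(\tfrac12)_k}{k!\,(n+\tfrac32)_k\,(4n+3)_k}=\left(\frac{2^8}{5^5}\right)^n\frac{(\tfrac54)_n(\tfrac34)_n(\tfrac32)_n^2}{(\tfrac65)_n(\tfrac75)_n(\tfrac35)_n(\tfrac45)_n}.$$ (The sum is finite, since $(-n)_k=0$ for $k>n$.)
   Context: $(a)_j=\Gamma(a+j)/\Gamma(a)=a(a+1)\cdots(a+j-1)$ denotes the rising factorial (Pochhammer symbol), with $(a)_0=1$. *)

theory Defs
  imports Complex_Main
begin

end

theory Submission
  imports Defs
begin

definition tt :: "real \<Rightarrow> nat \<Rightarrow> nat \<Rightarrow> real" where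
  "tt d m k = (-1::real)^k * (4 * real k + 1) *
     (pochhammer (- real m) k * pochhammer (3/2 - d) k * pochhammer (1/2) k)
     / (fact k * pochhammer (real m + 3/2) k * pochhammer d k)"

definition qq :: "real \<Rightarrow> real \<Rightarrow> real \<Rightarrow> real" where
  "qq d m x = (d-1)*(m+3/2)+(m+d+1/2)*x+x^2"

definition GG :: "real \<Rightarrow> nat \<Rightarrow> nat \<Rightarrow> real" where
  "GG d m k = (-1::real)^k * real k * pochhammer (- real m - 1) k * pochhammer (3/2-d) k
     * pochhammer (1/2) k / (fact k * pochhammer (real m + 5/2) k * pochhammer d k)
     * (-4 * qq d (real m) (real k) / ((real m+1)*(2*real m+3)))"

lemma gen:
  fixes a N Z Xv c e W :: real
  assumes "Z = Xv*c/e" "e\<noteq>0" "c\<noteq>0" "Xv\<noteq>0" "W\<noteq>0"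
  shows "a*N/(Z*W) = a/Xv * (N*e/(c*W))"
  using assms(2-5) unfolding assms(1) by (simp add: field_simps)

lemma abs3:
  fixes s k1 A a1 E e1 H h1 F Y y1 D d1 q P :: real
  assumes "k1\<noteq>0" "F\<noteq>0" "Y\<noteq>0" "y1\<noteq>0" "D\<noteq>0" "d1\<noteq>0" "P\<noteq>0"
  shows "(-s)*k1*(A*a1)*(E*e1)*(H*h1)/((k1*F)*(Y*y1)*(D*d1)) * (-4*q/P)
     = (s*A*E*H)*(a1*e1*h1*4*q)/((F*Y*D)*(y1*d1*P))"
  using assms by (simp add: field_simps)

lemma abs4:
  fixes s kk A E H F Y D q P :: real
  assumes "F\<noteq>0" "Y\<noteq>0" "D\<noteq>0" "P\<noteq>0"
  shows "s*kk*A*E*H/(F*Y*D) * (-4*q/P) = (s*A*E*H)*(-(kk*4*q))/((F*Y*D)*P)"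
  using assms by (simp add: field_simps)

lemma ratid:
  fixes d m k :: real
  assumes "d>0" "m\<ge>0" "k\<ge>0"
  shows "(4*k+1)*(d+m)/(m+3/2+k) - (4*k+1)*(m+1-k)/(m+1)
   = ((k-m-1)*(3/2-d+k)*(1/2+k)*4*((d-1)*(m+3/2)+(m+d+1/2)*(k+1)+(k+1)^2))*(m+3/2)/((m+3/2+k)*((m+5/2+k)*(d+k)*((m+1)*(2*m+3))))
     - (-(k*4*((d-1)*(m+3/2)+(m+d+1/2)*k+k^2)))*(m+3/2)/((m+3/2+k)*((m+1)*(2*m+3)))"
proof -
  have h: "m+3/2+k \<noteq> 0" "m+1 \<noteq> 0" "2*m+3 \<noteq> 0" "m+5/2+k \<noteq> 0" "d+k\<noteq>0"
    "m * 2 + 3 + k * 2 \<noteq> 0" "m * 2 + 5 + k * 2 \<noteq> 0" "m*2+3 \<noteq> 0" using assms by auto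
  show ?thesis
    apply (simp add: h divide_simps)
    apply algebra
    done
qed

lemma key:
  fixes d :: real and m k :: nat
  assumes d: "d > 0"
  shows "tt d (Suc m) k * (d + real m) / (real m + 3/2) - tt d m k = GG d m (Suc k) - GG d m k"
proof -
  define s where "s = (-1::real)^k"
  define A where "A = pochhammer (- real m - 1) k"
  define pm where "pm = pochhammer (- real m) k"
  define X where "X = pochhammer (real m + 3/2) k"
  define Y where "Y = pochhammer (real m + 5/2) k"
  define E where "E = pochhammer (3/2 - d) k"
  define H where "H = pochhammer (1/2::real) k"
  define D where "D = pochhammer d k"
  define F where "F = (fact k :: real)"
  define B where "B = s*A*E*H/(F*X*D)"
  define mm where "mm = real m"
  define kk where "kk = real k"
  have mm: "mm \<ge> 0" and kk: "kk \<ge> 0" unfolding mm_def kk_def by auto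
  have X0: "X \<noteq> 0" unfolding X_def using pochhammer_pos[of "real m + 3/2" k] by auto
  have D0: "D \<noteq> 0" unfolding D_def using pochhammer_pos[of d k] d by auto
  have F0: "F \<noteq> 0" unfolding F_def by auto
  have pmA: "pm = A*(kk-mm-1)/(-mm-1)"
  proof -
    have "pochhammer (- real m - 1) (Suc k) = (- real m - 1) * pochhammer (- real m - 1 + 1) k"
      by (rule pochhammer_rec)
    moreover have "pochhammer (- real m - 1) (Suc k) = pochhammer (- real m - 1) k * (- real m - 1 + real k)"
      by (rule pochhammer_Suc)
    ultimately have "pm * (-mm-1) = A*(kk-mm-1)" unfolding pm_def A_def mm_def kk_def by (simp add: algebra_simps)
    moreover have "-mm-1 \<noteq> 0" using mm by auto
    ultimately show ?thesis by (simp add: field_simps)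
  qed
  have YX: "Y = X*(mm+3/2+kk)/(mm+3/2)"
  proof -
    have "pochhammer (real m + 3/2) (Suc k) = (real m + 3/2) * pochhammer (real m + 3/2 + 1) k"
      by (rule pochhammer_rec)
    moreover have "pochhammer (real m + 3/2) (Suc k) = pochhammer (real m + 3/2) k * (real m + 3/2 + real k)"
      by (rule pochhammer_Suc)
    ultimately have "Y * (mm+3/2) = X*(mm+3/2+kk)" unfolding Y_def X_def mm_def kk_def by (simp add: algebra_simps)
    moreover have "mm+3/2 \<noteq> 0" using mm by auto
    ultimately show ?thesis by (simp add: field_simps)
  qed
  have h1: "mm+3/2 \<noteq> 0" "mm+3/2+kk \<noteq> 0" "mm+1 \<noteq> 0" "-mm-1 \<noteq> 0" "mm+5/2+kk \<noteq> 0" "d+kk \<noteq> 0"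
    "kk+1 \<noteq> 0" "2*mm+3 \<noteq> 0" using mm kk d by auto
  have T1: "tt d (Suc m) k * (d + real m) / (real m + 3/2) = B*((4*kk+1)*(d+mm)/(mm+3/2+kk))"
  proof -
    have e1: "pochhammer (- real (Suc m)) k = A" unfolding A_def
      by (rule arg_cong[where f="\<lambda>x. pochhammer x k"]) simp
    have e2: "pochhammer (real (Suc m) + 3/2) k = Y" unfolding Y_def
      by (rule arg_cong[where f="\<lambda>x. pochhammer x k"]) simp
    have "tt d (Suc m) k = s*(4*kk+1)*(A*E*H)/(F*Y*D)"
      unfolding tt_def e1 e2 s_def A_def E_def H_def F_def Y_def D_def kk_def
      by (simp add: algebra_simps)
    have YX2: "F*Y*D*(mm+3/2) = F*X*D*(mm+3/2+kk)" unfolding YX using h1 by (simp add: field_simps)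
    have "tt d (Suc m) k * (d + real m) / (real m + 3/2) = s*(4*kk+1)*(A*E*H)*(d+mm)/(F*Y*D*(mm+3/2))"
      unfolding \<open>tt d (Suc m) k = _\<close> mm_def by simp
    also have "\<dots> = s*(4*kk+1)*(A*E*H)*(d+mm)/(F*X*D*(mm+3/2+kk))" unfolding YX2 ..
    also have "\<dots> = B*((4*kk+1)*(d+mm)/(mm+3/2+kk))" unfolding B_def by simp
    finally show ?thesis .
  qed
  have pmA': "pm = A*(mm+1-kk)/(mm+1)" unfolding pmA using h1 by (simp add: field_simps)
  have T2: "tt d m k = B*((4*kk+1)*(mm+1-kk)/(mm+1))"
  proof -
    have "tt d m k = s*(4*kk+1)*(pm*E*H)/(F*X*D)"
      unfolding tt_def s_def pm_def E_def H_def F_def X_def D_def kk_def mm_def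
      by (simp add: algebra_simps)
    also have "\<dots> = s*(4*kk+1)*(A*E*H)*(mm+1-kk)/(F*X*D*(mm+1))"
      unfolding pmA' by (simp add: ac_simps)
    also have "\<dots> = B*((4*kk+1)*(mm+1-kk)/(mm+1))" unfolding B_def by simp
    finally show ?thesis .
  qed
  have Y0: "Y \<noteq> 0" unfolding Y_def using pochhammer_pos[of "real m + 5/2" k] by auto
  have ZX: "F*Y*D = (F*X*D)*(mm+3/2+kk)/(mm+3/2)" unfolding YX by simp
  have XD0: "F*X*D \<noteq> 0" using X0 D0 F0 by simp
  have T3: "GG d m (Suc k) = B * (((kk-mm-1)*(3/2-d+kk)*(1/2+kk)*4*((d-1)*(mm+3/2)+(mm+d+1/2)*(kk+1)+(kk+1)^2))*(mm+3/2)/((mm+3/2+kk)*((mm+5/2+kk)*(d+kk)*((mm+1)*(2*mm+3)))))"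
  proof -
    have "GG d m (Suc k) = (-s)*(kk+1)*(A*(kk-mm-1))*(E*(3/2-d+kk))*(H*(1/2+kk))/(((kk+1)*F)*(Y*(mm+5/2+kk))*(D*(d+kk)))
       * (-4 * ((d-1)*(mm+3/2)+(mm+d+1/2)*(kk+1)+(kk+1)^2) / ((mm+1)*(2*mm+3)))"
      unfolding GG_def qq_def s_def A_def E_def H_def F_def Y_def D_def kk_def mm_def
      by (simp add: pochhammer_Suc algebra_simps)
    also have "\<dots> = (s*A*E*H) * ((kk-mm-1)*(3/2-d+kk)*(1/2+kk)*4*((d-1)*(mm+3/2)+(mm+d+1/2)*(kk+1)+(kk+1)^2))
         / ((F*Y*D) * ((mm+5/2+kk)*(d+kk)*((mm+1)*(2*mm+3))))"
      by (rule abs3) (use X0 D0 F0 Y0 h1 in auto)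
    also have "\<dots> = B * (((kk-mm-1)*(3/2-d+kk)*(1/2+kk)*4*((d-1)*(mm+3/2)+(mm+d+1/2)*(kk+1)+(kk+1)^2))*(mm+3/2)/((mm+3/2+kk)*((mm+5/2+kk)*(d+kk)*((mm+1)*(2*mm+3)))))"
      unfolding B_def by (rule gen[OF ZX]) (use h1 XD0 in auto)
    finally show ?thesis .
  qed
  have T4: "GG d m k = B * ((-(kk*4*((d-1)*(mm+3/2)+(mm+d+1/2)*kk+kk^2)))*(mm+3/2)/((mm+3/2+kk)*((mm+1)*(2*mm+3))))"
  proof -
    have "GG d m k = s*kk*A*E*H/(F*Y*D) * (-4 * ((d-1)*(mm+3/2)+(mm+d+1/2)*kk+kk^2) / ((mm+1)*(2*mm+3)))"
      unfolding GG_def qq_def s_def A_def E_def H_def F_def Y_def D_def kk_def mm_def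
      by (simp add: algebra_simps)
    also have "\<dots> = (s*A*E*H) * (-(kk*4*((d-1)*(mm+3/2)+(mm+d+1/2)*kk+kk^2))) / ((F*Y*D) * ((mm+1)*(2*mm+3)))"
      by (rule abs4) (use X0 D0 F0 Y0 h1 in auto)
    also have "\<dots> = B * ((-(kk*4*((d-1)*(mm+3/2)+(mm+d+1/2)*kk+kk^2)))*(mm+3/2)/((mm+3/2+kk)*((mm+1)*(2*mm+3))))"
      unfolding B_def by (rule gen[OF ZX]) (use h1 XD0 in auto)
    finally show ?thesis .
  qed
  have R: "(4*kk+1)*(d+mm)/(mm+3/2+kk) - (4*kk+1)*(mm+1-kk)/(mm+1)
   = ((kk-mm-1)*(3/2-d+kk)*(1/2+kk)*4*((d-1)*(mm+3/2)+(mm+d+1/2)*(kk+1)+(kk+1)^2))*(mm+3/2)/((mm+3/2+kk)*((mm+5/2+kk)*(d+kk)*((mm+1)*(2*mm+3))))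
     - (-(kk*4*((d-1)*(mm+3/2)+(mm+d+1/2)*kk+kk^2)))*(mm+3/2)/((mm+3/2+kk)*((mm+1)*(2*mm+3)))"
    by (rule ratid[OF d mm kk])
  show ?thesis unfolding T1 T2 T3 T4
    unfolding right_diff_distrib[symmetric] R ..
qed

lemma tt_zero: "m < k \<Longrightarrow> tt d m k = 0"
  unfolding tt_def using pochhammer_of_nat_eq_0_lemma[of m k, where 'a=real] by simp

lemma GG_end: "GG d m (Suc (Suc m)) = 0"
proof -
  have "pochhammer (- real m - 1) (Suc (Suc m)) = pochhammer (- of_nat (Suc m)) (Suc (Suc m))"
    by (rule arg_cong[where f="\<lambda>x. pochhammer x (Suc (Suc m))"]) simp
  then have "pochhammer (- real m - 1) (Suc (Suc m)) = 0"
    using pochhammer_of_nat_eq_0_lemma[of "Suc m" "Suc (Suc m)", where 'a=real] by simp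
  then show ?thesis unfolding GG_def by simp
qed

lemma Ssum:
  assumes d: "d > 0"
  shows "(\<Sum>k<Suc m. tt d m k) = pochhammer (3/2) m / pochhammer d m"
proof (induction m)
  case 0
  then show ?case by (simp add: tt_def)
next
  case (Suc m)
  have "(\<Sum>k<Suc (Suc m). tt d (Suc m) k * (d + real m) / (real m + 3/2) - tt d m k)
      = GG d m (Suc (Suc m)) - GG d m 0"
    using key[OF d, of m] sum_lessThan_telescope[of "GG d m" "Suc (Suc m)"] by simp
  also have "\<dots> = 0" using GG_end by (simp add: GG_def)
  finally have "(\<Sum>k<Suc (Suc m). tt d (Suc m) k * (d + real m) / (real m + 3/2))
      = (\<Sum>k<Suc (Suc m). tt d m k)" by (simp add: sum_subtractf)
  also have "\<dots> = (\<Sum>k<Suc m. tt d m k)" using tt_zero[of m "Suc m" d] by simp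
  finally have e: "(\<Sum>k<Suc (Suc m). tt d (Suc m) k) * ((d + real m) / (real m + 3/2))
      = pochhammer (3/2) m / pochhammer d m" unfolding Suc sum_distrib_right
    by (simp add: algebra_simps)
  define S where "S = (\<Sum>k<Suc (Suc m). tt d (Suc m) k)"
  have e': "S * ((d + real m) / (real m + 3/2)) = pochhammer (3/2) m / pochhammer d m"
    using e unfolding S_def .
  have p1: "d + real m > 0" using d by simp
  have p2: "pochhammer d m > 0" using d pochhammer_pos by blast
  have c0: "(d + real m) / (real m + 3/2) \<noteq> 0" using p1 by (simp add: add_pos_pos)
  have "S = (S * ((d + real m) / (real m + 3/2))) / ((d + real m) / (real m + 3/2))"
    using c0 by (rule nonzero_mult_div_cancel_right[symmetric])
  also have "\<dots> = (pochhammer (3/2) m / pochhammer d m) / ((d + real m) / (real m + 3/2))"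
    unfolding e' ..
  finally have "S = (pochhammer (3/2) m / pochhammer d m) / ((d + real m) / (real m + 3/2))" .
  then show ?case unfolding S_def using p1 p2 by (simp add: pochhammer_Suc field_simps add_ac)
qed

lemma cf_step:
  fixes x :: real
  assumes "x \<ge> 0"
  shows "(3/2+x)*((3+4*x)*(4+4*x)*(5+4*x)*(6+4*x))/((3+5*x)*(4+5*x)*(5+5*x)*(6+5*x)*(7+5*x))
    = 2^8/5^5 * ((5/4+x)*(3/4+x)*(3/2+x)^2/((6/5+x)*(7/5+x)*(3/5+x)*(4/5+x)))"
proof -
  have h: "3+5*x \<noteq> 0" "4+5*x \<noteq> 0" "5+5*x \<noteq> 0" "6+5*x \<noteq> 0" "7+5*x \<noteq> 0"
    "6/5+x \<noteq> 0" "7/5+x \<noteq> 0" "3/5+x \<noteq> 0" "4/5+x \<noteq> 0"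
    "6+x*5 \<noteq> 0" "7+x*5 \<noteq> 0" "3+x*5 \<noteq> 0" "4+x*5 \<noteq> 0" "5+x*5 \<noteq> 0"
    "x*5+6 \<noteq> 0" "x*5+7 \<noteq> 0" "x*5+3 \<noteq> 0" "x*5+4 \<noteq> 0" "x*5+5 \<noteq> 0"
    "5*x+6 \<noteq> 0" "5*x+7 \<noteq> 0" "5*x+3 \<noteq> 0" "5*x+4 \<noteq> 0" "5*x+5 \<noteq> 0"
    using assms by auto
  show ?thesis
    apply (simp add: h divide_simps)
    apply algebra
    done
qed

lemma absR:
  fixes c p1 p2 p3 q1 q2 q3 q4 x1 x2 x3 y1 y2 y3 y4 :: real
  assumes "q1\<noteq>0" "q2\<noteq>0" "q3\<noteq>0" "q4\<noteq>0" "y1\<noteq>0" "y2\<noteq>0" "y3\<noteq>0" "y4\<noteq>0"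
  shows "c^(Suc n) * (p1*x1*(p2*x2)*(p3*x3)^2)/(q1*y1*(q2*y2)*(q3*y3)*(q4*y4))
    = (c^n*(p1*p2*p3^2)/(q1*q2*q3*q4)) * (c*(x1*x2*x3^2/(y1*y2*y3*y4)))"
  using assms by (simp add: field_simps power2_eq_square)

lemma absL:
  fixes P a P4 a4 P5 a5 :: real
  assumes "P5 \<noteq> 0" "a5 \<noteq> 0"
  shows "P*a*(P4*a4)/(P5*a5) = (P*P4/P5)*(a*a4/a5)"
  using assms by (simp add: field_simps)

lemma closed_form:
  "pochhammer (3/2::real) n * pochhammer 3 (4*n) / pochhammer 3 (5*n)
   = (2^8 / 5^5) ^ n *
            (pochhammer (5/4) n * pochhammer (3/4) n * (pochhammer (3/2) n)^2)
            / (pochhammer (6/5) n * pochhammer (7/5) n * pochhammer (3/5) n * pochhammer (4/5) n)"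
proof (induction n)
  case 0
  then show ?case by simp
next
  case (Suc n)
  define x where "x = real n"
  have x: "x \<ge> 0" unfolding x_def by simp
  have e4: "4 * Suc n = Suc (Suc (Suc (Suc (4*n))))" by simp
  have e5: "5 * Suc n = Suc (Suc (Suc (Suc (Suc (5*n)))))" by simp
  have p4: "pochhammer (3::real) (4 * Suc n) = pochhammer 3 (4*n) * ((3+4*x)*(4+4*x)*(5+4*x)*(6+4*x))"
    unfolding e4 x_def by (simp add: pochhammer_Suc algebra_simps)
  have p5: "pochhammer (3::real) (5 * Suc n) = pochhammer 3 (5*n) * ((3+5*x)*(4+5*x)*(5+5*x)*(6+5*x)*(7+5*x))"
    unfolding e5 x_def by (simp add: pochhammer_Suc algebra_simps)
  have P5: "pochhammer (3::real) (5*n) \<noteq> 0" using pochhammer_pos[of "3::real" "5*n"] by simp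
  have a5: "(3+5*x)*(4+5*x)*(5+5*x)*(6+5*x)*(7+5*x) \<noteq> 0" using x by simp
  have "pochhammer (3/2::real) (Suc n) * pochhammer 3 (4 * Suc n) / pochhammer 3 (5 * Suc n)
     = pochhammer (3/2::real) n * (3/2+x) * (pochhammer 3 (4*n) * ((3+4*x)*(4+4*x)*(5+4*x)*(6+4*x)))
       / (pochhammer 3 (5*n) * ((3+5*x)*(4+5*x)*(5+5*x)*(6+5*x)*(7+5*x)))"
    unfolding p4 p5 by (simp add: pochhammer_Suc x_def add_ac)
  also have "\<dots> = (pochhammer (3/2::real) n * pochhammer 3 (4*n) / pochhammer 3 (5*n))
      * ((3/2+x)*((3+4*x)*(4+4*x)*(5+4*x)*(6+4*x))/((3+5*x)*(4+5*x)*(5+5*x)*(6+5*x)*(7+5*x)))"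
    by (rule absL[OF P5 a5])
  also have "\<dots> = ((2^8 / 5^5) ^ n *
            (pochhammer (5/4) n * pochhammer (3/4) n * (pochhammer (3/2) n)^2)
            / (pochhammer (6/5) n * pochhammer (7/5) n * pochhammer (3/5) n * pochhammer (4/5) n))
      * (2^8/5^5 * ((5/4+x)*(3/4+x)*(3/2+x)^2/((6/5+x)*(7/5+x)*(3/5+x)*(4/5+x))))"
    unfolding Suc cf_step[OF x] ..
  also have "\<dots> = (2^8 / 5^5) ^ Suc n *
            (pochhammer (5/4) n * (5/4+x) * (pochhammer (3/4) n * (3/4+x)) * (pochhammer (3/2) n * (3/2+x))^2)
            / (pochhammer (6/5) n * (6/5+x) * (pochhammer (7/5) n * (7/5+x)) * (pochhammer (3/5) n * (3/5+x)) * (pochhammer (4/5) n * (4/5+x)))"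
    by (rule absR[symmetric]) (use x pochhammer_pos[of "6/5::real" n] pochhammer_pos[of "7/5::real" n]
       pochhammer_pos[of "3/5::real" n] pochhammer_pos[of "4/5::real" n] in auto)
  also have "\<dots> = (2^8 / 5^5) ^ Suc n *
            (pochhammer (5/4) (Suc n) * pochhammer (3/4) (Suc n) * (pochhammer (3/2) (Suc n))^2)
            / (pochhammer (6/5) (Suc n) * pochhammer (7/5) (Suc n) * pochhammer (3/5) (Suc n) * pochhammer (4/5) (Suc n))"
    by (simp add: pochhammer_Suc x_def add_ac)
  finally show ?case .
qed

theorem theorem6:
  fixes n :: nat
  shows "(\<lambda>k. (-1::real)^k * (4 * real k + 1) *
            (pochhammer (- real n) k * pochhammer (- 4 * real n - 3/2) k * pochhammer (1/2) k)
            / (fact k * pochhammer (real n + 3/2) k * pochhammer (4 * real n + 3) k))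
         sums ((2^8 / 5^5) ^ n *
            (pochhammer (5/4) n * pochhammer (3/4) n * (pochhammer (3/2) n)^2)
            / (pochhammer (6/5) n * pochhammer (7/5) n * pochhammer (3/5) n * pochhammer (4/5) n))"
proof -
  define d where "d = 4 * real n + 3"
  have d: "d > 0" unfolding d_def by simp
  have fe: "(\<lambda>k. (-1::real)^k * (4 * real k + 1) *
            (pochhammer (- real n) k * pochhammer (- 4 * real n - 3/2) k * pochhammer (1/2) k)
            / (fact k * pochhammer (real n + 3/2) k * pochhammer (4 * real n + 3) k)) = tt d n"
  proof
    fix k
    have eq: "3/2 - d = - 4 * real n - 3/2" unfolding d_def by simp
    show "(-1::real)^k * (4 * real k + 1) *
            (pochhammer (- real n) k * pochhammer (- 4 * real n - 3/2) k * pochhammer (1/2) k)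
            / (fact k * pochhammer (real n + 3/2) k * pochhammer (4 * real n + 3) k) = tt d n k"
      unfolding tt_def eq unfolding d_def by simp
  qed
  have "tt d n sums (\<Sum>k\<in>{..<Suc n}. tt d n k)"
    by (rule sums_finite) (auto simp: tt_zero)
  moreover have "(\<Sum>k\<in>{..<Suc n}. tt d n k) = pochhammer (3/2) n / pochhammer d n"
    by (rule Ssum[OF d])
  moreover have "pochhammer d n = pochhammer 3 (5*n) / pochhammer (3::real) (4*n)"
  proof -
    have "pochhammer (3::real) (4*n + n) = pochhammer 3 (4*n) * pochhammer (3 + of_nat (4*n)) n"
      by (rule pochhammer_product')
    moreover have "4*n+n = 5*n" by simp
    moreover have "(3::real) + of_nat (4*n) = d" unfolding d_def by simp
    moreover have "pochhammer (3::real) (4*n) \<noteq> 0" using pochhammer_pos[of "3::real" "4*n"] by simp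
    ultimately show ?thesis by (simp add: field_simps)
  qed
  moreover have "pochhammer (3::real) (5*n) \<noteq> 0" using pochhammer_pos[of "3::real" "5*n"] by simp
  ultimately show ?thesis unfolding fe using closed_form[of n] by simp
qed

end
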